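(* Let $K\subseteq\mathbb{R}$ be a field that is an algebraic extension of $\mathbb{Q}$, and let $K^+=\{x\in K:x>0\}$. Then $K^+$ cannot be written as $H_1\sqcup H_2$ with $H_1,H_2$ disjoint nonempty subsets, each closed under addition and multiplication. *)

theory Defs
  imports Complex_Main "HOL-Computational_Algebra.Polynomial"
begin

definition real_subfield :: "real set \<Rightarrow> bool" where
  "real_subfield K \<longleftrightarrow> 0 \<in> K \<and> 1 \<in> K \<and>
     (\<forall>x\<in>K. \<forall>y\<in>K. x + y \<in> K \<and> x * y \<in> K) \<and>
     (\<forall>x\<in>K. - x \<in> K) \<and> (\<forall>x\<in>K. x \<noteq> 0 \<longrightarrow> inverse x \<in> K)"

definition add_mult_closed :: "real set \<Rightarrow> bool" where
  "add_mult_closed H \<longleftrightarrow> (\<forall>x\<in>H. \<forall>y\<in>H. x + y \<in> H \<and> x * y \<in> H)"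

end

theory Submission
  imports Defs
begin

definition ratp :: "real poly \<Rightarrow> bool" where
  "ratp P \<longleftrightarrow> (\<forall>k. coeff P k \<in> \<rat>)"

lemma ratp_mult: "ratp p \<Longrightarrow> ratp q \<Longrightarrow> ratp (p * q)"
  unfolding ratp_def by (auto simp: coeff_mult intro!: Rats_sum Rats_mult)

lemma ratp_one: "ratp 1"
  unfolding ratp_def by (auto simp: coeff_1)

lemma ratp_pow: "ratp p \<Longrightarrow> ratp (p ^ n)"
  by (induction n) (auto intro: ratp_mult ratp_one)

lemma ratp_smult: "a \<in> \<rat> \<Longrightarrow> ratp p \<Longrightarrow> ratp (smult a p)"
  unfolding ratp_def by auto

lemma ratp_sum: "(\<And>i. i \<in> A \<Longrightarrow> ratp (f i)) \<Longrightarrow> ratp (\<Sum>i\<in>A. f i)"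
  unfolding ratp_def by (auto simp: coeff_sum intro!: Rats_sum)

lemma ratp_lin: "a \<in> \<rat> \<Longrightarrow> b \<in> \<rat> \<Longrightarrow> ratp [:a, b:]"
  unfolding ratp_def by (auto simp: coeff_pCons split: nat.split)

definition dom :: "real poly \<Rightarrow> real poly \<Rightarrow> bool" where
  "dom p P \<longleftrightarrow> (\<forall>k. \<bar>coeff p k\<bar> \<le> coeff P k)"

lemma dom_mult:
  assumes "dom p P" "dom q Q" shows "dom (p * q) (P * Q)"
  unfolding dom_def
proof
  fix k
  have "\<bar>coeff (p * q) k\<bar> \<le> (\<Sum>j\<le>k. \<bar>coeff p j * coeff q (k - j)\<bar>)"
    unfolding coeff_mult by (rule sum_abs)
  also have "\<dots> \<le> (\<Sum>j\<le>k. coeff P j * coeff Q (k - j))"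
  proof (rule sum_mono)
    fix j
    have a: "\<bar>coeff p j\<bar> \<le> coeff P j" and b: "\<bar>coeff q (k-j)\<bar> \<le> coeff Q (k-j)"
      using assms unfolding dom_def by auto
    show "\<bar>coeff p j * coeff q (k - j)\<bar> \<le> coeff P j * coeff Q (k - j)"
      unfolding abs_mult by (rule mult_mono[OF a b]) (use a in auto)
  qed
  also have "\<dots> = coeff (P * Q) k" by (simp add: coeff_mult)
  finally show "\<bar>coeff (p * q) k\<bar> \<le> coeff (P * Q) k" .
qed

lemma dom_one: "dom 1 1"
  unfolding dom_def by (auto simp: coeff_1)

lemma dom_pow: "dom p P \<Longrightarrow> dom (p ^ n) (P ^ n)"
  by (induction n) (auto intro: dom_mult dom_one)

lemma dom_lin: "dom [:a, b:] [:\<bar>a\<bar>, \<bar>b\<bar>:]"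
  unfolding dom_def by (auto simp: coeff_pCons split: nat.split)

lemma dom_le_poly1:
  assumes "dom p P" shows "coeff P k \<le> poly P 1"
proof -
  have nn: "\<And>j. 0 \<le> coeff P j" using assms unfolding dom_def by (meson abs_ge_zero order_trans)
  show ?thesis
  proof (cases "k \<le> degree P")
    case True
    have "coeff P k \<le> (\<Sum>i\<le>degree P. coeff P i)"
      by (rule member_le_sum) (auto simp: nn True)
    then show ?thesis by (simp add: poly_altdef)
  next
    case False
    then have "coeff P k = 0" by (simp add: coeff_eq_0)
    then show ?thesis by (simp add: poly_altdef nn sum_nonneg)
  qed
qed

lemma poly_sum_le:
  fixes P :: "real poly"
  assumes "degree P \<le> n" shows "poly P y = (\<Sum>k\<le>n. coeff P k * y ^ k)"
proof -
  have "poly P y = (\<Sum>k\<le>degree P. coeff P k * y ^ k)" by (rule poly_altdef)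
  also have "\<dots> = (\<Sum>k\<le>n. coeff P k * y ^ k)"
    by (rule sum.mono_neutral_left) (use assms in \<open>auto simp: coeff_eq_0\<close>)
  finally show ?thesis .
qed

lemma coeff_B: "coeff ([:1, 1:] ^ n) j = (of_nat (n choose j) :: real)"
proof (cases "j \<le> n")
  case True then show ?thesis using coeff_linear_poly_power[OF True, of "1::real" 1] by simp
next
  case False
  have "degree ([:1::real, 1:] ^ n) \<le> n"
    using degree_power_le[of "[:1::real,1:]" n] by simp
  with False show ?thesis by (simp add: coeff_eq_0)
qed

lemma homog:
  fixes P :: "real poly"
  assumes "degree P = d"
  shows "(\<Sum>i\<le>d. coeff P i * (y * u) ^ i * u ^ (d - i)) = u ^ d * poly P y"
proof -
  have "(\<Sum>i\<le>d. coeff P i * (y * u) ^ i * u ^ (d - i)) = (\<Sum>i\<le>d. u ^ d * (coeff P i * y ^ i))"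
  proof (rule sum.cong)
    fix i assume "i \<in> {..d}"
    then have "u ^ i * u ^ (d - i) = u ^ d" by (simp flip: power_add)
    then show "coeff P i * (y * u) ^ i * u ^ (d - i) = u ^ d * (coeff P i * y ^ i)"
      by (simp add: power_mult_distrib algebra_simps)
  qed simp
  also have "\<dots> = u ^ d * poly P y" by (simp add: poly_altdef assms sum_distrib_left)
  finally show ?thesis .
qed

lemma coeff_A_B:
  fixes a bb :: real
  shows "coeff ([:a, bb:] * X) (Suc k) = a * coeff X (Suc k) + bb * coeff X k"
  by simp

lemma core:
  fixes x :: real and p :: "real poly"
  assumes rp: "ratp p" and root: "poly p x = 0" and dpos: "poly (pderiv p) x > 0" and xpos: "x > 0"
  shows "\<exists>q r c. q \<in> \<rat> \<and> r \<in> \<rat> \<and> 0 < q \<and> q < x \<and> x < r \<and> (\<forall>k. c k \<in> \<rat>) \<and> 1 \<le> degree p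
     \<and> (\<forall>k\<in>{1..degree p}. c k > 0) \<and> (\<Sum>k\<le>degree p. c k * ((x-q)/(r-x))^k) = 0"
proof -
  define d where "d = degree p"
  have d1: "1 \<le> d"
  proof (rule ccontr)
    assume "\<not> 1 \<le> d" then have "degree p = 0" by (simp add: d_def)
    then have "pderiv p = 0" by (simp add: pderiv_eq_0_iff)
    with dpos show False by simp
  qed
  define T where "T = pcompose p [:x, 1:]"
  define b where "b i = coeff T i" for i
  have degT: "degree T = d" by (simp add: T_def d_def degree_pcompose)
  have polyT: "poly T y = poly p (x + y)" for y by (simp add: T_def poly_pcompose)
  have b0: "b 0 = 0" using root polyT[of 0] by (simp add: b_def flip: poly_0_coeff_0)
  have b1: "b 1 = poly (pderiv p) x"
  proof -
    have "pderiv T = pcompose (pderiv p) [:x,1:]" by (simp add: T_def pderiv_pcompose pderiv_pCons)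
    then have "coeff (pderiv T) 0 = poly (pderiv p) x" by (simp flip: poly_0_coeff_0 add: poly_pcompose)
    then show ?thesis by (simp add: b_def coeff_pderiv)
  qed
  have b1pos: "b 1 > 0" using b1 dpos by simp
  define S where "S = (\<Sum>i\<le>d. \<bar>b i\<bar>)"
  have S0: "S \<ge> 0" unfolding S_def by (rule sum_nonneg) auto
  define E :: real where "E = S * 2^d + 1"
  define L0 :: real where "L0 = 2^d + 1"
  define L where "L = 2 * L0"
  have Epos: "E > 0" using S0 by (simp add: E_def add_nonneg_pos)
  have L0pos: "L0 > 0" by (simp add: L0_def add_nonneg_pos)
  have Lpos: "L > 0" using L0pos by (simp add: L_def)
  define \<delta> where "\<delta> = min (x/2) (min (1/(1+L)) (b 1 / (2 * E * (1+L)^2)))"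
  have \<delta>pos: "\<delta> > 0" using xpos Lpos Epos b1pos by (simp add: \<delta>_def)
  obtain q where q: "q \<in> \<rat>" "x - \<delta> < q" "q < x" using Rats_dense_in_real[of "x-\<delta>" x] \<delta>pos by auto
  define \<alpha> where "\<alpha> = x - q"
  have \<alpha>: "0 < \<alpha>" "\<alpha> < \<delta>" using q by (auto simp: \<alpha>_def)
  have "x + L0*\<alpha> < x + L*\<alpha>" using \<alpha> L0pos by (simp add: L_def)
  then obtain r where r: "r \<in> \<rat>" "x + L0*\<alpha> < r" "r < x + L*\<alpha>" using Rats_dense_in_real by blast
  define \<beta> where "\<beta> = r - x"
  have \<beta>: "L0 * \<alpha> < \<beta>" "\<beta> < L * \<alpha>" using r by (auto simp: \<beta>_def)
  have \<beta>pos: "\<beta> > 0" using \<beta> \<alpha> L0pos by (smt (verit) mult_pos_pos)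
  have qpos: "0 < q" using q \<alpha> \<delta>_def by (auto simp: \<alpha>_def)
  have xr: "x < r" using \<beta>pos by (simp add: \<beta>_def)
  have ab: "\<alpha> + \<beta> < (1+L) * \<alpha>" using \<beta> by (simp add: algebra_simps)
  have "(1+L) * \<alpha> \<le> (1+L) * \<delta>" using \<alpha> Lpos by simp
  also have "(1+L) * \<delta> \<le> 1"
  proof -
    have "\<delta> \<le> 1/(1+L)" by (simp add: \<delta>_def)
    then have "(1+L) * \<delta> \<le> (1+L) * (1/(1+L))" using Lpos by (intro mult_left_mono) auto
    also have "\<dots> = 1" using Lpos by simp
    finally show ?thesis .
  qed
  finally have ab1: "\<alpha> + \<beta> \<le> 1" using ab by simp
  have keyineq: "E * (\<alpha>+\<beta>)^2 < b 1 * \<alpha>"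
  proof -
    have "(\<alpha>+\<beta>)^2 \<le> ((1+L)*\<alpha>)^2" using ab \<alpha> \<beta>pos by (intro power_mono) auto
    then have "E * (\<alpha>+\<beta>)^2 \<le> E * ((1+L)*\<alpha>)^2" using Epos by simp
    also have "\<dots> = \<alpha> * (E * (1+L)^2 * \<alpha>)" by (simp add: power2_eq_square algebra_simps)
    also have "E * (1+L)^2 * \<alpha> \<le> E * (1+L)^2 * \<delta>" using \<alpha> Epos by (intro mult_left_mono) auto
    also have "E * (1+L)^2 * \<delta> \<le> b 1 / 2"
    proof -
      have "\<delta> \<le> b 1 / (2 * E * (1+L)^2)" by (simp add: \<delta>_def)
      then have "E * (1+L)^2 * \<delta> \<le> E * (1+L)^2 * (b 1 / (2 * E * (1+L)^2))"
        using Epos Lpos by (intro mult_left_mono) auto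
      also have "\<dots> = b 1 / 2" using Epos Lpos by (simp add: field_simps)
      finally show ?thesis .
    qed
    finally have "E * (\<alpha>+\<beta>)^2 \<le> \<alpha> * (b 1 / 2)" using \<alpha> by (simp add: mult_left_mono)
    also have "\<dots> < b 1 * \<alpha>" using \<alpha> b1pos by simp
    finally show ?thesis .
  qed
  define A where "A = [:-\<alpha>, \<beta>:]"
  define B :: "real poly" where "B = [:1, 1:]"
  define Prat where "Prat = (\<Sum>i\<le>d. smult (coeff p i) ([:q, r:]^i * B^(d-i)))"
  define Q where "Q = (\<Sum>i\<le>d. smult (b i) (A^i * B^(d-i)))"
  have polyPrat: "poly Prat t = (1+t)^d * poly p ((q + r*t)/(1+t))" if t: "t \<noteq> -1" for t
  proof -
    have t1: "1 + t \<noteq> 0" using t by (metis add.commute add_eq_0_iff)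
    define s where "s = (q + r*t)/(1+t)"
    have e: "q + t * r = s * (1+t)" using t1 by (simp add: field_simps s_def)
    have "poly Prat t = (\<Sum>i\<le>d. coeff p i * (s * (1+t))^i * (1+t)^(d-i))"
      unfolding Prat_def B_def by (simp add: poly_sum e mult.assoc)
    also have "\<dots> = (1+t)^d * poly p s" by (rule homog) (simp add: d_def)
    finally show ?thesis by (simp add: s_def)
  qed
  have polyQ: "poly Q t = (1+t)^d * poly p ((q + r*t)/(1+t))" if t: "t \<noteq> -1" for t
  proof -
    have t1: "1 + t \<noteq> 0" using t by (metis add.commute add_eq_0_iff)
    define s where "s = (q + r*t)/(1+t)"
    have e: "t * \<beta> - \<alpha> = (s - x) * (1+t)" using t1
      by (simp add: field_simps \<alpha>_def \<beta>_def s_def)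
    have "poly Q t = (\<Sum>i\<le>d. coeff T i * ((s - x) * (1+t))^i * (1+t)^(d-i))"
      unfolding Q_def B_def A_def b_def by (simp add: poly_sum e mult.assoc)
    also have "\<dots> = (1+t)^d * poly T (s - x)" by (rule homog) (simp add: degT)
    also have "\<dots> = (1+t)^d * poly p s" by (simp add: polyT)
    finally show ?thesis by (simp add: s_def)
  qed
  have PQ: "Prat = Q"
  proof (rule ccontr)
    assume "Prat \<noteq> Q"
    then have "Prat - Q \<noteq> 0" by simp
    then have fin: "finite {t. poly (Prat - Q) t = 0}" by (rule poly_roots_finite)
    have "{t. t \<noteq> (-1::real)} \<subseteq> {t. poly (Prat - Q) t = 0}" using polyPrat polyQ by auto
    with fin have "finite {t. t \<noteq> (-1::real)}" by (rule finite_subset[rotated])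
    moreover have "(UNIV :: real set) = insert (-1) {t. t \<noteq> (-1::real)}" by auto
    ultimately have "finite (UNIV :: real set)" by (metis finite_insert)
    then show False by (simp add: infinite_UNIV_char_0)
  qed
  define c where "c k = coeff Prat k" for k
  have ratPrat: "ratp Prat" unfolding Prat_def B_def
    using rp q r by (intro ratp_sum ratp_smult ratp_mult ratp_pow ratp_lin) (auto simp: ratp_def)
  have crat: "\<forall>k. c k \<in> \<rat>" using ratPrat by (simp add: c_def ratp_def)
  have degP: "degree Prat \<le> d" unfolding Prat_def
  proof (rule degree_sum_le)
    fix i assume i: "i \<in> {..d}"
    have "degree ([:q, r:]^i * B^(d-i)) \<le> degree ([:q, r:]^i) + degree (B^(d-i))" by (rule degree_mult_le)
    also have "\<dots> \<le> i * degree [:q, r:] + (d - i) * degree B" using degree_power_le[of "[:q,r:]" i] degree_power_le[of B "d-i"] by (simp add: mult.commute)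
    also have "\<dots> \<le> i + (d - i)" by (intro add_mono) (auto simp: B_def)
    also have "\<dots> = d" using i by simp
    finally show "degree (smult (coeff p i) ([:q, r:]^i * B^(d-i))) \<le> d"
      using degree_smult_le order_trans by blast
  qed simp
  have cpos: "c k > 0" if k: "k \<in> {1..d}" for k
  proof -
    obtain k' where k': "k = Suc k'" using k by (cases k) auto
    have ck: "c k = (\<Sum>i\<le>d. b i * coeff (A^i * B^(d-i)) k)"
      by (simp add: c_def PQ Q_def coeff_sum)
    have set: "{..d} = insert 0 (insert 1 {2..d})" using d1 by auto
    define R where "R = (\<Sum>i\<in>{2..d}. b i * coeff (A^i * B^(d-i)) k)"
    have ck2: "c k = b 1 * coeff (A * B^(d-1)) k + R"
      unfolding ck set R_def by (simp add: b0)
    have t1: "coeff (A * B^(d-1)) k = - \<alpha> * of_nat ((d-1) choose k) + \<beta> * of_nat ((d-1) choose k')"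
      unfolding A_def B_def k' coeff_A_B coeff_B by simp
    have C1: "(1::real) \<le> of_nat ((d-1) choose k')" using k k'
      by (simp add: Suc_le_eq zero_less_binomial)
    have C2: "of_nat ((d-1) choose k) \<le> (2::real)^d"
    proof -
      have "(d-1) choose k \<le> 2^(d-1)" by (rule binomial_le_pow2)
      also have "(2::nat)^(d-1) \<le> 2^d" by (intro power_increasing) auto
      finally show ?thesis by (metis of_nat_le_iff of_nat_numeral of_nat_power)
    qed
    have "coeff (A * B^(d-1)) k \<ge> \<beta> - \<alpha> * 2^d"
    proof -
      have "\<beta> \<le> \<beta> * of_nat ((d-1) choose k')" using C1 \<beta>pos by simp
      moreover have "\<alpha> * of_nat ((d-1) choose k) \<le> \<alpha> * 2^d" using C2 \<alpha> by simp
      ultimately show ?thesis unfolding t1 by simp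
    qed
    moreover have "\<beta> - \<alpha> * 2^d > \<alpha>" using \<beta> by (simp add: L0_def algebra_simps)
    ultimately have T1: "b 1 * coeff (A * B^(d-1)) k > b 1 * \<alpha>" using b1pos
      by (smt (verit) mult_strict_left_mono)
    have dA: "dom A [:\<alpha>, \<beta>:]" using dom_lin[of "-\<alpha>" \<beta>] \<alpha> \<beta>pos by (simp add: A_def)
    have dB: "dom B B" using dom_lin[of 1 1] by (simp add: B_def)
    have bnd: "\<bar>coeff (A^i * B^m) k\<bar> \<le> (\<alpha>+\<beta>)^i * 2^m" for i m
    proof -
      have dd: "dom (A^i * B^m) ([:\<alpha>, \<beta>:]^i * B^m)" by (intro dom_mult dom_pow dA dB)
      then have "\<bar>coeff (A^i * B^m) k\<bar> \<le> coeff ([:\<alpha>, \<beta>:]^i * B^m) k" by (simp add: dom_def)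
      also have "\<dots> \<le> poly ([:\<alpha>, \<beta>:]^i * B^m) 1" by (rule dom_le_poly1[OF dd])
      also have "\<dots> = (\<alpha>+\<beta>)^i * 2^m" by (simp add: B_def)
      finally show ?thesis .
    qed
    have "\<bar>R\<bar> \<le> (\<Sum>i\<in>{2..d}. \<bar>b i * coeff (A^i * B^(d-i)) k\<bar>)" unfolding R_def by (rule sum_abs)
    also have "\<dots> \<le> (\<Sum>i\<in>{2..d}. \<bar>b i\<bar> * ((\<alpha>+\<beta>)^2 * 2^d))"
    proof (rule sum_mono)
      fix i assume i: "i \<in> {2..d}"
      have "(\<alpha>+\<beta>)^i \<le> (\<alpha>+\<beta>)^2" using i ab1 \<alpha> \<beta>pos by (intro power_decreasing) auto
      moreover have "(2::real)^(d-i) \<le> 2^d" by (intro power_increasing) auto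
      ultimately have "(\<alpha>+\<beta>)^i * 2^(d-i) \<le> (\<alpha>+\<beta>)^2 * 2^d"
        using \<alpha> \<beta>pos by (intro mult_mono) auto
      then have "\<bar>coeff (A^i * B^(d-i)) k\<bar> \<le> (\<alpha>+\<beta>)^2 * 2^d" using bnd[of i "d-i"] by linarith
      then show "\<bar>b i * coeff (A^i * B^(d-i)) k\<bar> \<le> \<bar>b i\<bar> * ((\<alpha>+\<beta>)^2 * 2^d)"
        unfolding abs_mult by (intro mult_left_mono) auto
    qed
    also have "\<dots> = (\<Sum>i\<in>{2..d}. \<bar>b i\<bar>) * ((\<alpha>+\<beta>)^2 * 2^d)" by (simp add: sum_distrib_right)
    also have "\<dots> \<le> S * ((\<alpha>+\<beta>)^2 * 2^d)" unfolding S_def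
      by (intro mult_right_mono sum_mono2) auto
    also have "\<dots> \<le> E * (\<alpha>+\<beta>)^2" by (simp add: E_def algebra_simps)
    finally have "\<bar>R\<bar> < b 1 * \<alpha>" using keyineq by simp
    then show ?thesis using ck2 T1 by linarith
  qed
  define w where "w = (x-q)/(r-x)"
  have wpos: "w > 0" using q xr by (simp add: w_def)
  have wx: "(q + r*w)/(1+w) = x"
  proof -
    have rx: "r - x \<noteq> 0" "r - q \<noteq> 0" using q xr by auto
    have h1: "1 + w = (r-q)/(r-x)" using rx by (simp add: w_def field_simps)
    have h2: "q + r*w = x*((r-q)/(r-x))" using rx by (simp add: w_def field_simps)
    show ?thesis unfolding h1 h2 using rx by simp
  qed
  have "poly Prat w = 0" using polyPrat[of w] wpos wx root by simp
  moreover have "poly Prat w = (\<Sum>k\<le>d. c k * w^k)" unfolding c_def by (rule poly_sum_le[OF degP])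
  ultimately have rel: "(\<Sum>k\<le>d. c k * w^k) = 0" by simp
  show ?thesis
    using q r qpos xr crat d1 cpos rel by (intro exI[of _ q] exI[of _ r] exI[of _ c]) (simp add: d_def w_def)
qed

lemma sf_neg: "real_subfield K \<Longrightarrow> a \<in> K \<Longrightarrow> - a \<in> K"
  unfolding real_subfield_def by simp

lemma sf_add: "real_subfield K \<Longrightarrow> a \<in> K \<Longrightarrow> b \<in> K \<Longrightarrow> a + b \<in> K"
  unfolding real_subfield_def by simp

lemma sf_mult: "real_subfield K \<Longrightarrow> a \<in> K \<Longrightarrow> b \<in> K \<Longrightarrow> a * b \<in> K"
  unfolding real_subfield_def by simp

lemma sf_inv: "real_subfield K \<Longrightarrow> a \<in> K \<Longrightarrow> inverse a \<in> K"
  unfolding real_subfield_def by (cases "a = 0") simp_all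

lemma sf_diff: "real_subfield K \<Longrightarrow> a \<in> K \<Longrightarrow> b \<in> K \<Longrightarrow> a - b \<in> K"
  using sf_add[of K a "-b"] sf_neg[of K b] by simp

lemma sf_div: "real_subfield K \<Longrightarrow> a \<in> K \<Longrightarrow> b \<in> K \<Longrightarrow> a / b \<in> K"
  using sf_mult[of K a "inverse b"] sf_inv[of K b] by (simp add: divide_inverse)

lemma sf_nat: assumes K: "real_subfield K" shows "of_nat n \<in> K"
proof (induction n)
  case 0 then show ?case using K by (simp add: real_subfield_def)
next
  case (Suc n)
  have "1 \<in> K" using K by (simp add: real_subfield_def)
  then have "of_nat n + 1 \<in> K" using sf_add[OF K Suc] by blast
  then show ?case by (simp add: add.commute)
qed

lemma sf_int: assumes K: "real_subfield K" shows "of_int z \<in> K"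
proof (cases "z \<ge> 0")
  case True
  have e: "(of_int z :: real) = of_nat (nat z)" using True by simp
  show ?thesis unfolding e by (rule sf_nat[OF K])
next
  case False
  have e: "(of_int z :: real) = - of_nat (nat (-z))" using False by simp
  show ?thesis unfolding e by (rule sf_neg[OF K sf_nat[OF K]])
qed

lemma sf_rat: assumes K: "real_subfield K" and r: "r \<in> \<rat>" shows "r \<in> K"
proof -
  obtain a b where "b > 0" "coprime a b" and ab: "r = of_int a / of_int b"
    using r by (rule Rats_cases')
  have "of_int a / of_int b \<in> K" by (rule sf_div[OF K sf_int[OF K] sf_int[OF K]])
  then show ?thesis using ab by simp
qed

lemma nmul: "add_mult_closed H \<Longrightarrow> z \<in> H \<Longrightarrow> 1 \<le> n \<Longrightarrow> of_nat n * z \<in> H"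
proof (induction n)
  case 0 then show ?case by simp
next
  case (Suc n)
  show ?case
  proof (cases "n = 0")
    case True then show ?thesis using Suc by simp
  next
    case False
    then have "of_nat n * z \<in> H" using Suc by simp
    then show ?thesis using Suc.prems unfolding add_mult_closed_def
      by (simp add: algebra_simps)
  qed
qed

lemma scale_gen:
  assumes K: "real_subfield K" and c: "add_mult_closed H" "add_mult_closed H'"
    and disj: "H \<inter> H' = {}" and un: "H \<union> H' = {x\<in>K. x > 0}"
    and z: "z \<in> H" and rho: "\<rho> \<in> \<rat>" "\<rho> > 0"
  shows "\<rho> * z \<in> H"
proof (rule ccontr)
  assume nz: "\<rho> * z \<notin> H"
  obtain m n :: nat where mn: "n \<noteq> 0" "\<bar>\<rho>\<bar> = real m / real n" using rho(1) by (rule Rats_abs_nat_div_natE)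
  have rho': "\<rho> = real m / real n" using mn rho by simp
  have m0: "m \<noteq> 0"
  proof
    assume "m = 0" then have "\<rho> = 0" using rho' by simp
    with rho show False by simp
  qed
  have zK: "z \<in> K" "z > 0" using z un by auto
  have "\<rho> * z \<in> K" using sf_mult[OF K sf_rat[OF K rho(1)] zK(1)] .
  moreover have "\<rho> * z > 0" using rho zK by simp
  ultimately have "\<rho> * z \<in> H'" using un nz by auto
  then have "of_nat n * (\<rho> * z) \<in> H'" using nmul[OF c(2)] mn by simp
  moreover have "of_nat n * (\<rho> * z) = of_nat m * z" using mn rho' by simp
  moreover have "of_nat m * z \<in> H" using nmul[OF c(1) z] m0 by simp
  ultimately show False using disj by auto
qed

lemma alg_poly:
  fixes x :: real
  assumes "algebraic x"
  shows "\<exists>p. ratp p \<and> poly p x = 0 \<and> poly (pderiv p) x > 0"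
proof -
  obtain p0 where p0: "\<forall>i. coeff p0 i \<in> \<int>" "p0 \<noteq> 0" "poly p0 x = 0"
    using assms unfolding algebraic_def by blast
  define P where "P p \<longleftrightarrow> ratp p \<and> p \<noteq> 0 \<and> poly p x = 0" for p
  have "P p0" using p0 Ints_subset_Rats by (auto simp: P_def ratp_def)
  then obtain p where p: "P p" and minp: "\<And>p'. P p' \<Longrightarrow> degree p \<le> degree p'"
    using ex_has_least_nat[of P p0 degree] by blast
  have dp: "degree p \<noteq> 0"
  proof
    assume "degree p = 0"
    then have "poly p x = coeff p 0" by (simp add: poly_altdef)
    moreover have "coeff p 0 \<noteq> 0" using p \<open>degree p = 0\<close>
      by (metis P_def leading_coeff_0_iff)
    ultimately show False using p by (simp add: P_def)
  qed
  have rpd: "ratp (pderiv p)" using p by (auto simp: P_def ratp_def coeff_pderiv intro!: Rats_mult)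
  have pd0: "pderiv p \<noteq> 0" using dp by (simp add: pderiv_eq_0_iff)
  have "degree (pderiv p) < degree p" using dp by (simp add: degree_pderiv)
  then have "\<not> P (pderiv p)" using minp by fastforce
  then have nz: "poly (pderiv p) x \<noteq> 0" using rpd pd0 by (simp add: P_def)
  show ?thesis
  proof (cases "poly (pderiv p) x > 0")
    case True then show ?thesis using p by (auto simp: P_def)
  next
    case False
    then have "poly (pderiv (-p)) x > 0" using nz by (simp add: pderiv_minus)
    moreover have "ratp (-p)" using p by (auto simp: P_def ratp_def)
    ultimately show ?thesis using p by (intro exI[of _ "-p"]) (auto simp: P_def)
  qed
qed

lemma main:
  assumes K: "real_subfield K" and alg: "\<forall>x\<in>K. algebraic x"
    and disj: "H1 \<inter> H2 = {}" and un: "H1 \<union> H2 = {x\<in>K. x > 0}"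
    and c1: "add_mult_closed H1" and c2: "add_mult_closed H2"
    and one: "1 \<in> H1" and xH: "x \<in> H2"
  shows False
proof -
  have disj': "H2 \<inter> H1 = {}" using disj by (simp add: Int_commute)
  have un': "H2 \<union> H1 = {x\<in>K. x > 0}" using un by (simp add: Un_commute)
  have inU: "y \<in> H1 \<or> y \<in> H2 \<longleftrightarrow> y \<in> K \<and> y > 0" for y
  proof -
    have "y \<in> H1 \<union> H2 \<longleftrightarrow> y \<in> K \<and> y > 0" unfolding un by simp
    then show ?thesis by simp
  qed
  have nd: "y \<in> H1 \<Longrightarrow> y \<in> H2 \<Longrightarrow> False" for y using disj by blast
  have xK: "x \<in> K" "x > 0" using xH inU by blast+
  have ratH1: "\<rho> \<in> H1" if "\<rho> \<in> \<rat>" "\<rho> > 0" for \<rho>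
    using scale_gen[OF K c1 c2 disj un one that] by simp
  have scale2: "\<rho> * z \<in> H2" if "z \<in> H2" "\<rho> \<in> \<rat>" "\<rho> > 0" for \<rho> z
    using scale_gen[OF K c2 c1 disj' un' that] .
  have addH1: "a + b \<in> H1" if "a \<in> H1" "b \<in> H1" for a b using c1 that unfolding add_mult_closed_def by blast
  have addH2: "a + b \<in> H2" if "a \<in> H2" "b \<in> H2" for a b using c2 that unfolding add_mult_closed_def by blast
  have mulH1: "a * b \<in> H1" if "a \<in> H1" "b \<in> H1" for a b using c1 that unfolding add_mult_closed_def by blast
  have mulH2: "a * b \<in> H2" if "a \<in> H2" "b \<in> H2" for a b using c2 that unfolding add_mult_closed_def by blast
  have d1: "a - b \<in> H1" if ab: "a \<in> H1" "b \<in> H2" "b < a" for a b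
  proof (rule ccontr)
    assume n: "a - b \<notin> H1"
    have "a \<in> K" "b \<in> K" using ab inU by blast+
    then have "a - b \<in> K" using sf_diff[OF K] by blast
    moreover have "a - b > 0" using ab by simp
    ultimately have "a - b \<in> H2" using n inU by blast
    then have "b + (a - b) \<in> H2" using addH2 ab by blast
    then show False using ab nd by simp
  qed
  have d2: "b - a \<in> H2" if ab: "a \<in> H1" "b \<in> H2" "a < b" for a b
  proof (rule ccontr)
    assume n: "b - a \<notin> H2"
    have "a \<in> K" "b \<in> K" using ab inU by blast+
    then have "b - a \<in> K" using sf_diff[OF K] by blast
    moreover have "b - a > 0" using ab by simp
    ultimately have "b - a \<in> H1" using n inU by blast
    then have "a + (b - a) \<in> H1" using addH1 ab by blast
    then show False using ab nd by simp
  qed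
  obtain p where p: "ratp p" "poly p x = 0" "poly (pderiv p) x > 0"
    using alg_poly alg xK by blast
  obtain q r c where qr: "q \<in> \<rat>" "r \<in> \<rat>" "0 < q" "q < x" "x < r" and crat: "\<forall>k. c k \<in> \<rat>"
    and d1': "1 \<le> degree p" and cpos: "\<forall>k\<in>{1..degree p}. c k > 0"
    and rel: "(\<Sum>k\<le>degree p. c k * ((x-q)/(r-x))^k) = 0"
    using core[OF p xK(2)] by blast
  define d where "d = degree p"
  define w where "w = (x-q)/(r-x)"
  have qH: "q \<in> H1" using ratH1 qr by simp
  have rH: "r \<in> H1" using ratH1 qr by simp
  have xq: "x - q \<in> H2" using d2[OF qH xH] qr by simp
  have rx: "r - x \<in> H1" using d1[OF rH xH] qr by simp
  have wK: "w \<in> K" unfolding w_def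
    using sf_div[OF K sf_diff[OF K xK(1) sf_rat[OF K qr(1)]] sf_diff[OF K sf_rat[OF K qr(2)] xK(1)]] .
  have wpos: "w > 0" using qr by (simp add: w_def)
  have wH2: "w \<in> H2"
  proof (rule ccontr)
    assume "w \<notin> H2"
    then have "w \<in> H1" using wK wpos inU by blast
    then have "w * (r - x) \<in> H1" using rx mulH1 by blast
    moreover have "w * (r - x) = x - q" using qr by (simp add: w_def)
    ultimately show False using xq nd by simp
  qed
  have pw: "w ^ k \<in> H2" if "1 \<le> k" for k
    using that
  proof (induction k)
    case 0 then show ?case by simp
  next
    case (Suc k)
    show ?case
    proof (cases "k = 0")
      case True then show ?thesis using wH2 by simp
    next
      case False
      then have "w ^ k \<in> H2" using Suc by simp
      then show ?thesis using wH2 mulH2 by simp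
    qed
  qed
  have sumH2: "n \<le> d \<longrightarrow> 1 \<le> n \<longrightarrow> (\<Sum>k\<in>{1..n}. c k * w^k) \<in> H2" for n
  proof (induction n)
    case 0 then show ?case by simp
  next
    case (Suc n)
    show ?case
    proof (intro impI)
      assume h: "Suc n \<le> d" "1 \<le> Suc n"
      have t: "c (Suc n) * w ^ Suc n \<in> H2"
        using scale2[OF pw[of "Suc n"]] crat cpos h by (simp add: d_def)
      show "(\<Sum>k\<in>{1..Suc n}. c k * w^k) \<in> H2"
      proof (cases "n = 0")
        case True then show ?thesis using t by simp
      next
        case False
        then have "(\<Sum>k\<in>{1..n}. c k * w^k) \<in> H2" using Suc h by simp
        then show ?thesis using t addH2 by simp
      qed
    qed
  qed
  have set: "{..d} = insert 0 {1..d}" by auto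
  have "c 0 + (\<Sum>k\<in>{1..d}. c k * w^k) = 0"
    using rel unfolding d_def[symmetric] w_def[symmetric] set by simp
  then have eq: "(\<Sum>k\<in>{1..d}. c k * w^k) = - c 0" by simp
  have inH2: "(\<Sum>k\<in>{1..d}. c k * w^k) \<in> H2" using sumH2[of d] d1' by (simp add: d_def)
  then have "- c 0 > 0" using eq inU by (metis)
  then have "- c 0 \<in> H1" using ratH1 crat by simp
  then show False using inH2 eq nd by simp
qed

theorem corollary6p2:
  fixes K :: "real set"
  assumes "real_subfield K"
    and "\<forall>x\<in>K. algebraic x"
  shows "\<not> (\<exists>H1 H2. H1 \<noteq> {} \<and> H2 \<noteq> {} \<and> H1 \<inter> H2 = {} \<and>
             H1 \<union> H2 = {x\<in>K. x > 0} \<and>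
             add_mult_closed H1 \<and> add_mult_closed H2)"
proof
  assume "\<exists>H1 H2. H1 \<noteq> {} \<and> H2 \<noteq> {} \<and> H1 \<inter> H2 = {} \<and>
             H1 \<union> H2 = {x\<in>K. x > 0} \<and> add_mult_closed H1 \<and> add_mult_closed H2"
  then obtain H1 H2 where H: "H1 \<noteq> {}" "H2 \<noteq> {}" "H1 \<inter> H2 = {}"
    "H1 \<union> H2 = {x\<in>K. x > 0}" "add_mult_closed H1" "add_mult_closed H2" by blast
  have "1 \<in> K" using assms(1) by (simp add: real_subfield_def)
  then have "1 \<in> H1 \<union> H2" using H(4) by simp
  then show False
  proof
    assume "1 \<in> H1"
    moreover obtain x where "x \<in> H2" using H(2) by blast
    ultimately show False using main[OF assms H(3,4,5,6)] by blast
  next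
    assume "1 \<in> H2"
    moreover obtain x where "x \<in> H1" using H(1) by blast
    moreover have "H2 \<inter> H1 = {}" "H2 \<union> H1 = {x\<in>K. x > 0}" using H(3,4) by auto
    ultimately show False using main[OF assms \<open>H2 \<inter> H1 = {}\<close> \<open>H2 \<union> H1 = {x\<in>K. x > 0}\<close> H(6,5)] by blast
  qed
qed

end
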